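(* For any group $G$ the following conditions are equivalent: (i) $G$ is amenable; (ii) the comparison map $\iota^1: H^1(G;V)\to H^1_{(\infty)}(G;V)$ is injective for every dual normed $\mathbb{R}[G]$-module $V$; (iii) the comparison map $\iota^k: H^k(G;V)\to H^k_{(\infty)}(G;V)$ is injective for every dual normed $\mathbb{R}[G]$-module $V$ and every $k\in\mathbb{N}$.
   Context: A normed $\mathbb{R}[G]$-module is a normed real vector space $V$ on which $G$ acts on the left by linear isometries. For such $V$, $\ell^\infty(G,V)$ denotes the $\mathbb{R}[G]$-module of functions $f:G\to V$ with bounded image, with action $(g\cdot f)(h)=g\cdot (f(g^{-1}h))$. The $\ell^\infty$-cohomology of $G$ is $H^\bullet_{(\infty)}(G;V):=H^\bullet(G;\ell^\infty(G,V))$ (ordinary group cohomology with coefficients in the $\mathbb{R}[G]$-module $\ell^\infty(G,V)$). The comparison map $\iota^\bullet: H^\bullet(G;V)\to H^\bullet_{(\infty)}(G;V)$ is induced by the $G$-equivariant inclusion $\iota:V\to\ell^\infty(G,V)$ sending $v$ to the constant function with value $v$. A dual normed $\mathbb{R}[G]$-module is the topological dual $V=W'$ of a normed $\mathbb{R}[G]$-module $W$, with the operator norm and action $(g\cdot v)(w)=v(g^{-1}\cdot w)$. $G$ is amenable if there is a linear map $m:\ell^\infty(G,\mathbb{R})\to\mathbb{R}$ with $m(\text{constant } c)=c$, $m(f)\ge 0$ for $f\ge0$, and $m(g\cdot f)=m(f)$ for all $g,f$. *)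

theory Defs
  imports Complex_Main
begin

text \<open>The group G is the ambient type 'g of class group_add (group operation written +,
  identity 0, inverse uminus; commutativity is NOT assumed).\<close>

definition bdd_real_fun :: "('a \<Rightarrow> real) \<Rightarrow> bool" where
  "bdd_real_fun f \<longleftrightarrow> (\<exists>C. \<forall>h. \<bar>f h\<bar> \<le> C)"

definition amenable :: "'g::group_add itself \<Rightarrow> bool" where
  "amenable (_ :: 'g itself) \<longleftrightarrow>
     (\<exists>m :: ('g \<Rightarrow> real) \<Rightarrow> real.
        (\<forall>f f'. bdd_real_fun f \<and> bdd_real_fun f' \<longrightarrow> m (\<lambda>h. f h + f' h) = m f + m f') \<and>
        (\<forall>a f. bdd_real_fun f \<longrightarrow> m (\<lambda>h. a * f h) = a * m f) \<and>
        (\<forall>c. m (\<lambda>h. c) = c) \<and>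
        (\<forall>f. bdd_real_fun f \<and> (\<forall>h. 0 \<le> f h) \<longrightarrow> 0 \<le> m f) \<and>
        (\<forall>g f. bdd_real_fun f \<longrightarrow> m (\<lambda>h. f ((- g) + h)) = m f))"

record ('g, 'm) gmod =
  mcarr :: "'m set"
  madd :: "'m \<Rightarrow> 'm \<Rightarrow> 'm"
  mscale :: "real \<Rightarrow> 'm \<Rightarrow> 'm"
  mzero :: "'m"
  mact :: "'g \<Rightarrow> 'm \<Rightarrow> 'm"

record ('g, 'm) nmod = "('g, 'm) gmod" +
  mnorm :: "'m \<Rightarrow> real"

definition normed_module :: "('g::group_add, 'w) nmod \<Rightarrow> bool" where
  "normed_module W \<longleftrightarrow>
     mzero W \<in> mcarr W \<and>
     (\<forall>x\<in>mcarr W. \<forall>y\<in>mcarr W. madd W x y \<in> mcarr W) \<and>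
     (\<forall>a. \<forall>x\<in>mcarr W. mscale W a x \<in> mcarr W) \<and>
     (\<forall>x\<in>mcarr W. \<forall>y\<in>mcarr W. \<forall>z\<in>mcarr W. madd W (madd W x y) z = madd W x (madd W y z)) \<and>
     (\<forall>x\<in>mcarr W. \<forall>y\<in>mcarr W. madd W x y = madd W y x) \<and>
     (\<forall>x\<in>mcarr W. madd W x (mzero W) = x) \<and>
     (\<forall>x\<in>mcarr W. madd W x (mscale W (-1) x) = mzero W) \<and>
     (\<forall>a b. \<forall>x\<in>mcarr W. mscale W (a + b) x = madd W (mscale W a x) (mscale W b x)) \<and>
     (\<forall>a. \<forall>x\<in>mcarr W. \<forall>y\<in>mcarr W. mscale W a (madd W x y) = madd W (mscale W a x) (mscale W a y)) \<and>
     (\<forall>a b. \<forall>x\<in>mcarr W. mscale W a (mscale W b x) = mscale W (a * b) x) \<and>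
     (\<forall>x\<in>mcarr W. mscale W 1 x = x) \<and>
     (\<forall>x\<in>mcarr W. 0 \<le> mnorm W x) \<and>
     (\<forall>x\<in>mcarr W. mnorm W x = 0 \<longleftrightarrow> x = mzero W) \<and>
     (\<forall>a. \<forall>x\<in>mcarr W. mnorm W (mscale W a x) = \<bar>a\<bar> * mnorm W x) \<and>
     (\<forall>x\<in>mcarr W. \<forall>y\<in>mcarr W. mnorm W (madd W x y) \<le> mnorm W x + mnorm W y) \<and>
     (\<forall>g. \<forall>x\<in>mcarr W. mact W g x \<in> mcarr W) \<and>
     (\<forall>g. \<forall>x\<in>mcarr W. \<forall>y\<in>mcarr W. mact W g (madd W x y) = madd W (mact W g x) (mact W g y)) \<and>
     (\<forall>g a. \<forall>x\<in>mcarr W. mact W g (mscale W a x) = mscale W a (mact W g x)) \<and>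
     (\<forall>g. \<forall>x\<in>mcarr W. mnorm W (mact W g x) = mnorm W x) \<and>
     (\<forall>x\<in>mcarr W. mact W 0 x = x) \<and>
     (\<forall>g h. \<forall>x\<in>mcarr W. mact W (g + h) x = mact W g (mact W h x))"

definition dual_module :: "('g::group_add, 'w) nmod \<Rightarrow> ('g, 'w \<Rightarrow> real) gmod" where
  "dual_module W = \<lparr>
     mcarr = {\<phi>. (\<forall>x\<in>mcarr W. \<forall>y\<in>mcarr W. \<phi> (madd W x y) = \<phi> x + \<phi> y) \<and>
                 (\<forall>a. \<forall>x\<in>mcarr W. \<phi> (mscale W a x) = a * \<phi> x) \<and>
                 (\<exists>C. \<forall>x\<in>mcarr W. \<bar>\<phi> x\<bar> \<le> C * mnorm W x) \<and>
                 (\<forall>x. x \<notin> mcarr W \<longrightarrow> \<phi> x = 0)},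
     madd = (\<lambda>\<phi> \<psi> x. \<phi> x + \<psi> x),
     mscale = (\<lambda>a \<phi> x. a * \<phi> x),
     mzero = (\<lambda>x. 0),
     mact = (\<lambda>g \<phi> x. if x \<in> mcarr W then \<phi> (mact W (- g) x) else 0) \<rparr>"

definition dual_norm :: "('g, 'w) nmod \<Rightarrow> ('w \<Rightarrow> real) \<Rightarrow> real" where
  "dual_norm W \<phi> = Sup {\<bar>\<phi> x\<bar> | x. x \<in> mcarr W \<and> mnorm W x \<le> 1}"

definition linf_module ::
  "('g::group_add, 'm, 'z) gmod_scheme \<Rightarrow> ('m \<Rightarrow> real) \<Rightarrow> ('g, 'g \<Rightarrow> 'm) gmod" where
  "linf_module V nv = \<lparr>
     mcarr = {f. (\<forall>h. f h \<in> mcarr V) \<and> (\<exists>C. \<forall>h. nv (f h) \<le> C)},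
     madd = (\<lambda>f f' h. madd V (f h) (f' h)),
     mscale = (\<lambda>a f h. mscale V a (f h)),
     mzero = (\<lambda>h. mzero V),
     mact = (\<lambda>g f h. mact V g (f ((- g) + h))) \<rparr>"

section \<open>Group cohomology via inhomogeneous cochains G^k \<rightarrow> M (lists of length k)\<close>

definition cochain :: "('g, 'm, 'z) gmod_scheme \<Rightarrow> nat \<Rightarrow> ('g list \<Rightarrow> 'm) \<Rightarrow> bool" where
  "cochain M k c \<longleftrightarrow> (\<forall>xs. length xs = k \<longrightarrow> c xs \<in> mcarr M)"

text \<open>(d c)(g_1,...,g_{k+1}) = g_1 c(g_2,...,g_{k+1})
   + sum_{i=1}^k (-1)^i c(g_1,...,g_i g_{i+1},...,g_{k+1}) + (-1)^{k+1} c(g_1,...,g_k).\<close>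
definition cobound ::
  "('g::group_add, 'm, 'z) gmod_scheme \<Rightarrow> nat \<Rightarrow> ('g list \<Rightarrow> 'm) \<Rightarrow> 'g list \<Rightarrow> 'm" where
  "cobound M k c xs =
     madd M (mact M (hd xs) (c (tl xs)))
       (madd M
          (foldr (madd M)
             (map (\<lambda>i. mscale M ((-1) ^ i)
                     (c (take (i - 1) xs @ [xs ! (i - 1) + xs ! i] @ drop (i + 1) xs)))
                  [1..<k + 1])
             (mzero M))
          (mscale M ((-1) ^ (k + 1)) (c (take k xs))))"

definition cocycle :: "('g::group_add, 'm, 'z) gmod_scheme \<Rightarrow> nat \<Rightarrow> ('g list \<Rightarrow> 'm) \<Rightarrow> bool" where
  "cocycle M k c \<longleftrightarrow> cochain M k c \<and> (\<forall>xs. length xs = Suc k \<longrightarrow> cobound M k c xs = mzero M)"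

definition coboundary :: "('g::group_add, 'm, 'z) gmod_scheme \<Rightarrow> nat \<Rightarrow> ('g list \<Rightarrow> 'm) \<Rightarrow> bool" where
  "coboundary M k c \<longleftrightarrow>
     (case k of 0 \<Rightarrow> c [] = mzero M
      | Suc j \<Rightarrow> (\<exists>b. cochain M j b \<and> (\<forall>xs. length xs = Suc j \<longrightarrow> c xs = cobound M j b xs)))"

text \<open>Injectivity of iota^k : H^k(G;V) \<rightarrow> H^k(G; l^\<infinity>(G,V)), induced by v \<mapsto> constant function:
  a k-cocycle whose image is a coboundary is itself a coboundary.\<close>
definition comparison_injective ::
  "('g::group_add, 'm, 'z) gmod_scheme \<Rightarrow> ('m \<Rightarrow> real) \<Rightarrow> nat \<Rightarrow> bool" where
  "comparison_injective V nv k \<longleftrightarrow>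
     (\<forall>c. cocycle V k c \<and> coboundary (linf_module V nv) k (\<lambda>xs h. c xs) \<longrightarrow> coboundary V k c)"

end

theory Submission
  imports Defs
begin


lemma dual_bound:
  assumes W: "normed_module W" and phi: "\<phi> \<in> mcarr (dual_module W)" and x: "x \<in> mcarr W"
  shows "\<bar>\<phi> x\<bar> \<le> dual_norm W \<phi> * mnorm W x"
proof -
  have add: "\<forall>x\<in>mcarr W. \<forall>y\<in>mcarr W. \<phi> (madd W x y) = \<phi> x + \<phi> y"
   and sc: "\<forall>a. \<forall>x\<in>mcarr W. \<phi> (mscale W a x) = a * \<phi> x"
   and bd: "\<exists>C. \<forall>x\<in>mcarr W. \<bar>\<phi> x\<bar> \<le> C * mnorm W x"
    using phi by (auto simp: dual_module_def)
  obtain C where C: "\<forall>x\<in>mcarr W. \<bar>\<phi> x\<bar> \<le> C * mnorm W x" using bd by blast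
  have z: "mzero W \<in> mcarr W" and zz: "madd W (mzero W) (mzero W) = mzero W"
    using W unfolding normed_module_def by auto
  have nn: "\<forall>x\<in>mcarr W. 0 \<le> mnorm W x" and n0: "\<forall>x\<in>mcarr W. mnorm W x = 0 \<longleftrightarrow> x = mzero W"
   and ns: "\<forall>a. \<forall>x\<in>mcarr W. mnorm W (mscale W a x) = \<bar>a\<bar> * mnorm W x"
   and scc: "\<forall>a. \<forall>x\<in>mcarr W. mscale W a x \<in> mcarr W"
    using W unfolding normed_module_def by auto
  define S where "S = {\<bar>\<phi> y\<bar> | y. y \<in> mcarr W \<and> mnorm W y \<le> 1}"
  have bdd: "bdd_above S"
    unfolding S_def bdd_above_def
  proof (intro exI[of _ "max C 0"] allI ballI)
    fix t assume "t \<in> {\<bar>\<phi> y\<bar> | y. y \<in> mcarr W \<and> mnorm W y \<le> 1}"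
    then obtain y where y: "y \<in> mcarr W" "mnorm W y \<le> 1" "t = \<bar>\<phi> y\<bar>" by blast
    have "C * mnorm W y \<le> max C 0 * mnorm W y" using nn y by (intro mult_right_mono) auto
    also have "\<dots> \<le> max C 0" using y nn by (simp add: mult_left_le)
    finally show "t \<le> max C 0" using C y by force
  qed
  have dn: "dual_norm W \<phi> = Sup S" unfolding dual_norm_def S_def by simp
  show ?thesis
  proof (cases "mnorm W x = 0")
    case True
    hence "x = mzero W" using n0 x by blast
    moreover have "\<phi> (mzero W) = 0" using add z zz by (metis add_cancel_right_right)
    ultimately show ?thesis using True by simp
  next
    case False
    define n where "n = mnorm W x"
    have npos: "n > 0" using False nn x n_def by force
    define u where "u = mscale W (1/n) x"
    have u: "u \<in> mcarr W" "mnorm W u = 1" using scc ns x npos unfolding u_def n_def by auto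
    have "\<phi> u = \<phi> x / n" using sc x unfolding u_def by simp
    hence "\<bar>\<phi> x\<bar> / n \<in> S" unfolding S_def using u npos by (auto intro!: exI[of _ u])
    hence "\<bar>\<phi> x\<bar> / n \<le> Sup S" using bdd by (simp add: cSup_upper)
    thus ?thesis using npos dn n_def by (simp add: divide_le_eq mult.commute)
  qed
qed


locale imean =
  fixes m :: "('g::group_add \<Rightarrow> real) \<Rightarrow> real"
  assumes madd: "\<And>f f'. bdd_real_fun f \<Longrightarrow> bdd_real_fun f' \<Longrightarrow> m (\<lambda>h. f h + f' h) = m f + m f'"
    and mscale: "\<And>a f. bdd_real_fun f \<Longrightarrow> m (\<lambda>h. a * f h) = a * m f"
    and mconst: "\<And>c. m (\<lambda>h. c) = c"
    and mpos: "\<And>f. bdd_real_fun f \<Longrightarrow> (\<forall>h. 0 \<le> f h) \<Longrightarrow> 0 \<le> m f"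
    and minv: "\<And>g f. bdd_real_fun f \<Longrightarrow> m (\<lambda>h. f ((- g) + h)) = m f"
begin

lemma mbound:
  assumes "\<And>h. \<bar>u h\<bar> \<le> B" shows "\<bar>m u\<bar> \<le> B"
proof -
  have bu: "bdd_real_fun u" using assms unfolding bdd_real_fun_def by blast
  have bc: "bdd_real_fun (\<lambda>h. c)" for c :: real unfolding bdd_real_fun_def by blast
  have bmu: "bdd_real_fun (\<lambda>h. (-1) * u h)" using assms unfolding bdd_real_fun_def by auto
  have e1: "m (\<lambda>h. B + (-1) * u h) = B - m u"
    using madd[OF bc bmu] mscale[OF bu, of "-1"] mconst by simp
  have e2: "m (\<lambda>h. B + u h) = B + m u"
    using madd[OF bc bu] mconst by simp
  have "0 \<le> m (\<lambda>h. B + (-1) * u h)"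
    by (rule mpos) (use assms in \<open>auto simp: bdd_real_fun_def abs_le_iff intro: exI[of _ "B + B"]\<close>)
  moreover have "0 \<le> m (\<lambda>h. B + u h)"
  proof (rule mpos)
    have "\<bar>B + u h\<bar> \<le> B + B" for h using assms[of h] by (simp add: abs_le_iff)
    thus "bdd_real_fun (\<lambda>h. B + u h)" unfolding bdd_real_fun_def by blast
    show "\<forall>h. 0 \<le> B + u h" proof
    fix h show "0 \<le> B + u h" using assms[of h] by (simp add: abs_le_iff)
  qed
  qed
  ultimately show ?thesis using e1 e2 by linarith
qed

definition R :: "('g, 'w) nmod \<Rightarrow> ('g \<Rightarrow> 'w \<Rightarrow> real) \<Rightarrow> 'w \<Rightarrow> real" where
  "R W f = (\<lambda>w. if w \<in> mcarr W then m (\<lambda>h. f h w) else 0)"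

definition S :: "('g \<Rightarrow> 'w \<Rightarrow> real) \<Rightarrow> bool" where
  "S f \<longleftrightarrow> (\<forall>w. bdd_real_fun (\<lambda>h. f h w))"

lemma R_add: "S f \<Longrightarrow> S f' \<Longrightarrow>
   R W (madd (linf_module (dual_module W) nv) f f') = madd (dual_module W) (R W f) (R W f')"
  unfolding R_def S_def by (auto simp: linf_module_def dual_module_def madd)

lemma R_scale: "S f \<Longrightarrow>
   R W (mscale (linf_module (dual_module W) nv) a f) = mscale (dual_module W) a (R W f)"
  unfolding R_def S_def by (auto simp: linf_module_def dual_module_def mscale)

lemma R_zero: "R W (mzero (linf_module (dual_module W) nv)) = mzero (dual_module W)"
  unfolding R_def by (auto simp: linf_module_def dual_module_def mconst)

lemma S_add: "S f \<Longrightarrow> S f' \<Longrightarrow> S (madd (linf_module (dual_module W) nv) f f')"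
  unfolding S_def bdd_real_fun_def
  apply (auto simp: linf_module_def dual_module_def)
  subgoal for w
    apply (erule allE[of _ w])+
    apply (elim exE)
    subgoal for C C' by (intro exI[of _ "C+C'"] allI) (metis abs_triangle_ineq add_mono order_trans)
    done
  done

lemma S_scale: "S f \<Longrightarrow> S (mscale (linf_module (dual_module W) nv) a f)"
  unfolding S_def bdd_real_fun_def
  apply (auto simp: linf_module_def dual_module_def abs_mult)
  subgoal for w
    apply (erule allE[of _ w])+
    apply (elim exE)
    subgoal for C by (rule exI[of _ "\<bar>a\<bar> * C"]) (simp add: mult_left_mono)
    done
  done

lemma S_zero: "S (mzero (linf_module (dual_module W) nv))"
  unfolding S_def bdd_real_fun_def by (auto simp: linf_module_def dual_module_def)

lemma S_act: "S f \<Longrightarrow> S (mact (linf_module (dual_module W) nv) g f)"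
  unfolding S_def bdd_real_fun_def
  apply (auto simp: linf_module_def dual_module_def)
  subgoal for w
    apply (erule allE[of _ "mact W (- g) w"])+
    apply (elim exE)
    subgoal for C by (intro exI[of _ "max C 0"]) (auto simp: le_max_iff_disj)
    done
  done

lemma R_act:
  assumes W: "normed_module W" and f: "S f"
  shows "R W (mact (linf_module (dual_module W) nv) g f) = mact (dual_module W) g (R W f)"
proof
  fix w
  have cl: "\<forall>g. \<forall>x\<in>mcarr W. mact W g x \<in> mcarr W" using W unfolding normed_module_def by auto
  show "R W (mact (linf_module (dual_module W) nv) g f) w = mact (dual_module W) g (R W f) w"
  proof (cases "w \<in> mcarr W")
    case True
    have b: "bdd_real_fun (\<lambda>h. f h (mact W (- g) w))" using f unfolding S_def by blast
    have "R W (mact (linf_module (dual_module W) nv) g f) w = m (\<lambda>h. f ((- g) + h) (mact W (- g) w))"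
      using True unfolding R_def by (simp add: linf_module_def dual_module_def)
    also have "\<dots> = m (\<lambda>h. f h (mact W (- g) w))"
      using minv[OF b, of g] by simp
    also have "\<dots> = mact (dual_module W) g (R W f) w"
      using True cl unfolding R_def by (simp add: dual_module_def)
    finally show ?thesis .
  qed (simp add: R_def dual_module_def)
qed

lemma S_foldr: "(\<forall>x\<in>set xs. S x) \<Longrightarrow> S z \<Longrightarrow> S (foldr (madd (linf_module (dual_module W) nv)) xs z)"
  by (induction xs) (auto intro: S_add)

lemma R_foldr: "(\<forall>x\<in>set xs. S x) \<Longrightarrow> S z \<Longrightarrow>
   R W (foldr (madd (linf_module (dual_module W) nv)) xs z) =
   foldr (madd (dual_module W)) (map (R W) xs) (R W z)"
  by (induction xs) (auto simp: R_add S_foldr)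

lemma R_const: "v \<in> mcarr (dual_module W) \<Longrightarrow> R W (\<lambda>h. v) = v"
  unfolding R_def by (auto simp: mconst dual_module_def)

lemma carrL_S:
  assumes W: "normed_module W" and f: "f \<in> mcarr (linf_module (dual_module W) (dual_norm W))"
  shows "S f"
  unfolding S_def
proof
  fix w
  have fh: "\<forall>h. f h \<in> mcarr (dual_module W)" and "\<exists>C. \<forall>h. dual_norm W (f h) \<le> C"
    using f by (auto simp: linf_module_def)
  then obtain C where C: "\<forall>h. dual_norm W (f h) \<le> C" by blast
  show "bdd_real_fun (\<lambda>h. f h w)"
  proof (cases "w \<in> mcarr W")
    case True
    have nn: "0 \<le> mnorm W w" using W True unfolding normed_module_def by auto
    have "\<bar>f h w\<bar> \<le> C * mnorm W w" for h
      using dual_bound[OF W fh[rule_format, of h] True] C[rule_format, of h] nn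
      by (meson mult_right_mono order_trans)
    thus ?thesis unfolding bdd_real_fun_def by blast
  next
    case False
    hence "f h w = 0" for h using fh by (auto simp: dual_module_def)
    thus ?thesis unfolding bdd_real_fun_def by auto
  qed
qed

lemma R_carr:
  assumes W: "normed_module W" and f: "f \<in> mcarr (linf_module (dual_module W) (dual_norm W))"
  shows "R W f \<in> mcarr (dual_module W)"
proof -
  have fh: "\<forall>h. f h \<in> mcarr (dual_module W)" and "\<exists>C. \<forall>h. dual_norm W (f h) \<le> C"
    using f by (auto simp: linf_module_def)
  then obtain C where C: "\<forall>h. dual_norm W (f h) \<le> C" by blast
  have Sf: "S f" using carrL_S[OF W f] .
  have cl: "\<forall>x\<in>mcarr W. \<forall>y\<in>mcarr W. madd W x y \<in> mcarr W" "\<forall>a. \<forall>x\<in>mcarr W. mscale W a x \<in> mcarr W"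
    using W unfolding normed_module_def by auto
  have lin: "\<forall>x\<in>mcarr W. \<forall>y\<in>mcarr W. f h (madd W x y) = f h x + f h y"
     "\<forall>a. \<forall>x\<in>mcarr W. f h (mscale W a x) = a * f h x" for h
    using fh[rule_format, of h] by (auto simp: dual_module_def)
  have bnd: "\<bar>R W f w\<bar> \<le> C * mnorm W w" if w: "w \<in> mcarr W" for w
  proof -
    have nn: "0 \<le> mnorm W w" using W w unfolding normed_module_def by auto
    have "\<bar>f h w\<bar> \<le> C * mnorm W w" for h
      using dual_bound[OF W fh[rule_format, of h] w] C[rule_format, of h] nn
      by (meson mult_right_mono order_trans)
    thus ?thesis using w unfolding R_def by (simp add: mbound)
  qed
  show ?thesis
    unfolding dual_module_def
  proof (simp, intro conjI ballI allI)
    fix x y assume x: "x \<in> mcarr W" and y: "y \<in> mcarr W"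
    have "R W f (madd W x y) = m (\<lambda>h. f h x + f h y)" using x y cl lin unfolding R_def by simp
    also have "\<dots> = R W f x + R W f y" using x y Sf madd unfolding R_def S_def by simp
    finally show "R W f (madd W x y) = R W f x + R W f y" .
  next
    fix a x assume x: "x \<in> mcarr W"
    have "R W f (mscale W a x) = m (\<lambda>h. a * f h x)" using x cl lin unfolding R_def by simp
    also have "\<dots> = a * R W f x" using x Sf mscale unfolding R_def S_def by simp
    finally show "R W f (mscale W a x) = a * R W f x" .
  next
    show "\<exists>C. \<forall>x\<in>mcarr W. \<bar>R W f x\<bar> \<le> C * mnorm W x" using bnd by blast
  qed (auto simp: R_def)
qed

lemma R_cobound:
  assumes W: "normed_module W" and b: "cochain (linf_module (dual_module W) (dual_norm W)) j b"
    and xs: "length xs = Suc j"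
  shows "R W (cobound (linf_module (dual_module W) (dual_norm W)) j b xs) =
         cobound (dual_module W) j (\<lambda>ys. R W (b ys)) xs"
proof -
  let ?L = "linf_module (dual_module W) (dual_norm W)"
  have Sb: "S (b ys)" if "length ys = j" for ys
    using carrL_S[OF W] b that unfolding cochain_def by blast
  have l1: "length (tl xs) = j" using xs by simp
  have l2: "length (take j xs) = j" using xs by simp
  have l3: "length (take (i - 1) xs @ [xs ! (i - 1) + xs ! i] @ drop (i + 1) xs) = j"
    if "i \<in> set [1..<j + 1]" for i using that xs by auto
  define F where "F = (\<lambda>i. mscale ?L ((-1) ^ i)
                     (b (take (i - 1) xs @ [xs ! (i - 1) + xs ! i] @ drop (i + 1) xs)))"
  have SF: "\<forall>x\<in>set (map F [1..<j + 1]). S x"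
    using l3 Sb by (auto simp: F_def intro!: S_scale)
  have mF: "map (R W) (map F [1..<j + 1]) = map (\<lambda>i. mscale (dual_module W) ((-1) ^ i)
                     (R W (b (take (i - 1) xs @ [xs ! (i - 1) + xs ! i] @ drop (i + 1) xs)))) [1..<j + 1]"
    using l3 Sb by (auto simp: F_def R_scale)
  have Sfold: "S (foldr (madd ?L) (map F [1..<j + 1]) (mzero ?L))"
    using SF by (intro S_foldr S_zero)
  have e1: "R W (foldr (madd ?L) (map F [1..<j + 1]) (mzero ?L)) =
     foldr (madd (dual_module W)) (map (\<lambda>i. mscale (dual_module W) ((-1) ^ i)
                     (R W (b (take (i - 1) xs @ [xs ! (i - 1) + xs ! i] @ drop (i + 1) xs)))) [1..<j + 1]) (mzero (dual_module W))"
    unfolding R_foldr[OF SF S_zero] R_zero mF by (rule refl)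
  show ?thesis
    unfolding cobound_def F_def[symmetric] e1[symmetric]
    using Sb[OF l1] Sb[OF l2] Sfold SF
    by (simp del: upt_Suc add: R_add R_act[OF W] R_scale S_act S_scale S_add R_foldr R_zero mF)
qed

lemma injA:
  fixes W :: "('g, 'w) nmod"
  assumes W: "normed_module W"
  shows "comparison_injective (dual_module W) (dual_norm W) k"
  unfolding comparison_injective_def
proof (intro allI impI, elim conjE)
  fix c
  assume cc: "cocycle (dual_module W) k c"
    and cb: "coboundary (linf_module (dual_module W) (dual_norm W)) k (\<lambda>xs h. c xs)"
  show "coboundary (dual_module W) k c"
  proof (cases k)
    case 0
    with cb have "\<forall>x. c [] x = mzero (dual_module W) x"
      by (simp add: coboundary_def linf_module_def fun_eq_iff dual_module_def)
    hence "c [] = mzero (dual_module W)" by (simp add: fun_eq_iff)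
    thus ?thesis using 0 by (simp add: coboundary_def)
  next
    case (Suc j)
    then obtain b where bc: "cochain (linf_module (dual_module W) (dual_norm W)) j b"
      and beq: "\<forall>xs. length xs = Suc j \<longrightarrow> (\<lambda>h. c xs) = cobound (linf_module (dual_module W) (dual_norm W)) j b xs"
      using cb by (auto simp: coboundary_def)
    have b'c: "cochain (dual_module W) j (\<lambda>ys. R W (b ys))"
      using bc R_carr[OF W] unfolding cochain_def by blast
    have "c xs = cobound (dual_module W) j (\<lambda>ys. R W (b ys)) xs" if xs: "length xs = Suc j" for xs
    proof -
      have "c xs \<in> mcarr (dual_module W)" using cc xs Suc unfolding cocycle_def cochain_def by blast
      hence "c xs = R W (\<lambda>h. c xs)" by (simp add: R_const)
      also have "\<dots> = R W (cobound (linf_module (dual_module W) (dual_norm W)) j b xs)"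
        using beq xs by simp
      also have "\<dots> = cobound (dual_module W) j (\<lambda>ys. R W (b ys)) xs"
        by (rule R_cobound[OF W bc xs])
      finally show ?thesis .
    qed
    thus ?thesis using Suc b'c by (auto simp: coboundary_def)
  qed
qed

end

lemma partA:
  assumes "amenable (G :: 'g::group_add itself)" and "normed_module (W :: ('g, 'w) nmod)"
  shows "comparison_injective (dual_module W) (dual_norm W) k"
proof -
  obtain m :: "('g \<Rightarrow> real) \<Rightarrow> real" where "imean m"
    using assms(1) unfolding amenable_def imean_def by blast
  thus ?thesis using imean.injA assms(2) by blast
qed



definition osc :: "('g \<Rightarrow> real) \<Rightarrow> real" where
  "osc f = Sup {\<bar>f x - f y\<bar> | x y. True}"

lemma bdd_osc: "bdd_real_fun f \<Longrightarrow> bdd_above {\<bar>f x - f y\<bar> | x y. True}"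
proof -
  assume "bdd_real_fun f"
  then obtain C where C: "\<forall>h. \<bar>f h\<bar> \<le> C" unfolding bdd_real_fun_def by blast
  have "\<bar>f x - f y\<bar> \<le> C + C" for x y
    using C[rule_format, of x] C[rule_format, of y] abs_triangle_ineq4[of "f x" "f y"] by linarith
  thus ?thesis unfolding bdd_above_def by blast
qed

lemma osc_upper: "bdd_real_fun f \<Longrightarrow> \<bar>f x - f y\<bar> \<le> osc f"
  unfolding osc_def by (rule cSup_upper, blast, rule bdd_osc)

lemma osc_least: "(\<And>x y. \<bar>f x - f y\<bar> \<le> M) \<Longrightarrow> osc f \<le> M"
  unfolding osc_def by (rule cSup_least) auto

lemma osc_nonneg: "bdd_real_fun f \<Longrightarrow> 0 \<le> osc f"
  using osc_upper[of f undefined undefined] by simp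

lemma osc_le_2C: "(\<And>x. \<bar>f x\<bar> \<le> C) \<Longrightarrow> osc f \<le> 2 * C"
proof (rule osc_least)
  fix x y assume C: "\<And>x. \<bar>f x\<bar> \<le> C"
  show "\<bar>f x - f y\<bar> \<le> 2 * C"
    using C[of x] C[of y] abs_triangle_ineq4[of "f x" "f y"] by linarith
qed

lemma bdd_add: "bdd_real_fun f \<Longrightarrow> bdd_real_fun g \<Longrightarrow> bdd_real_fun (\<lambda>x. f x + g x)"
  unfolding bdd_real_fun_def
  apply (elim exE)
  subgoal for C D by (rule exI[of _ "C + D"]) (auto intro: order_trans[OF abs_triangle_ineq] add_mono)
  done

lemma bdd_scale: "bdd_real_fun f \<Longrightarrow> bdd_real_fun (\<lambda>x. a * f x)"
  unfolding bdd_real_fun_def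
  apply (elim exE)
  subgoal for C by (rule exI[of _ "\<bar>a\<bar> * C"]) (auto simp: abs_mult intro: mult_left_mono)
  done

lemma bdd_const: "bdd_real_fun (\<lambda>x. c)"
  unfolding bdd_real_fun_def by blast

lemma bdd_comp: "bdd_real_fun f \<Longrightarrow> bdd_real_fun (\<lambda>x. f (t x))"
  unfolding bdd_real_fun_def by blast

lemma bdd_diff: "bdd_real_fun f \<Longrightarrow> bdd_real_fun g \<Longrightarrow> bdd_real_fun (\<lambda>x. f x - g x)"
  using bdd_add[of f "\<lambda>x. (-1) * g x"] bdd_scale[of g "-1"] by simp

definition actf :: "'g::group_add \<Rightarrow> ('g \<Rightarrow> real) \<Rightarrow> 'g \<Rightarrow> real" where
  "actf g f = (\<lambda>x. f (- g + x) - f (- g))"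

lemma bdd_actf: "bdd_real_fun f \<Longrightarrow> bdd_real_fun (actf g f)"
  unfolding actf_def using bdd_add[OF bdd_comp[of f "\<lambda>x. - g + x"] bdd_scale[OF bdd_const, of "-1" "f (-g)"]]
  by simp

lemma osc_zero_iff: "bdd_real_fun f \<Longrightarrow> f 0 = 0 \<Longrightarrow> osc f = 0 \<longleftrightarrow> f = (\<lambda>x. 0)"
proof
  assume b: "bdd_real_fun f" and f0: "f 0 = 0" and o: "osc f = 0"
  show "f = (\<lambda>x. 0)"
  proof
    fix x show "f x = 0" using osc_upper[OF b, of x 0] o f0 by simp
  qed
next
  assume "f = (\<lambda>x. 0)" thus "osc f = 0" using osc_least[of f 0] osc_nonneg[of f] by (simp add: bdd_const)
qed

lemma osc_scale_le: "bdd_real_fun f \<Longrightarrow> osc (\<lambda>x. a * f x) \<le> \<bar>a\<bar> * osc f"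
proof (rule osc_least)
  fix x y assume b: "bdd_real_fun f"
  have "\<bar>a * f x - a * f y\<bar> = \<bar>a\<bar> * \<bar>f x - f y\<bar>" by (simp add: abs_mult[symmetric] right_diff_distrib)
  also have "\<dots> \<le> \<bar>a\<bar> * osc f" by (rule mult_left_mono[OF osc_upper[OF b]]) simp
  finally show "\<bar>a * f x - a * f y\<bar> \<le> \<bar>a\<bar> * osc f" .
qed

lemma osc_scale: "bdd_real_fun f \<Longrightarrow> osc (\<lambda>x. a * f x) = \<bar>a\<bar> * osc f"
proof -
  assume b: "bdd_real_fun f"
  show ?thesis
  proof (cases "a = 0")
    case True thus ?thesis using osc_scale_le[OF b, of 0] osc_nonneg[OF bdd_scale[OF b, of 0]] by simp
  next
    case False
    have "osc f = osc (\<lambda>x. (1/a) * (a * f x))" using False by simp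
    also have "\<dots> \<le> \<bar>1/a\<bar> * osc (\<lambda>x. a * f x)" by (rule osc_scale_le[OF bdd_scale[OF b]])
    finally have "osc f \<le> \<bar>1/a\<bar> * osc (\<lambda>x. a * f x)" .
    hence "osc f \<le> osc (\<lambda>x. a * f x) / \<bar>a\<bar>" by (simp add: abs_divide)
    moreover have ap: "\<bar>a\<bar> > 0" using False by simp
    ultimately have "\<bar>a\<bar> * osc f \<le> osc (\<lambda>x. a * f x)"
      by (simp add: pos_le_divide_eq mult.commute)
    thus ?thesis using osc_scale_le[OF b, of a] by simp
  qed
qed

lemma osc_add: "bdd_real_fun f \<Longrightarrow> bdd_real_fun g \<Longrightarrow> osc (\<lambda>x. f x + g x) \<le> osc f + osc g"
proof (rule osc_least)
  fix x y assume "bdd_real_fun f" "bdd_real_fun g"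
  hence "\<bar>f x - f y\<bar> \<le> osc f" "\<bar>g x - g y\<bar> \<le> osc g" by (auto intro: osc_upper)
  thus "\<bar>f x + g x - (f y + g y)\<bar> \<le> osc f + osc g" by linarith
qed

lemma osc_actf: "bdd_real_fun f \<Longrightarrow> osc (actf g f) = osc f"
proof (rule antisym)
  assume b: "bdd_real_fun f"
  show "osc (actf g f) \<le> osc f"
    by (rule osc_least) (simp add: actf_def osc_upper[OF b])
  show "osc f \<le> osc (actf g f)"
  proof (rule osc_least)
    fix x y
    have "\<bar>f x - f y\<bar> = \<bar>actf g f (g + x) - actf g f (g + y)\<bar>"
      by (simp add: actf_def add.assoc[symmetric])
    thus "\<bar>f x - f y\<bar> \<le> osc (actf g f)" using osc_upper[OF bdd_actf[OF b]] by simp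
  qed
qed

definition Wq :: "('g::group_add, ('g \<Rightarrow> real) set) nmod" where
  "Wq = \<lparr> mcarr = {{f} | f. bdd_real_fun f \<and> f 0 = 0},
          madd = (\<lambda>A B. {\<lambda>x. the_elem A x + the_elem B x}),
          mscale = (\<lambda>a A. {\<lambda>x. a * the_elem A x}),
          mzero = {\<lambda>x. 0},
          mact = (\<lambda>g A. {actf g (the_elem A)}),
          mnorm = (\<lambda>A. osc (the_elem A)) \<rparr>"

lemma Wq_simps:
  "mcarr Wq = {{f} | f. bdd_real_fun f \<and> f 0 = 0}"
  "madd Wq {f} {g} = {\<lambda>x. f x + g x}"
  "mscale Wq a {f} = {\<lambda>x. a * f x}"
  "mzero Wq = {\<lambda>x. 0}"
  "mact Wq h {f} = {actf h f}"
  "mnorm Wq {f} = osc f"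
  by (simp_all add: Wq_def)

lemma actf_0: "f 0 = 0 \<Longrightarrow> actf 0 f = f"
  by (simp add: actf_def)

lemma actf_add: "actf (g + h) f = actf g (actf h f)"
  by (simp add: actf_def minus_add add.assoc[symmetric])

lemma normed_Wq: "normed_module (Wq :: ('g::group_add, ('g \<Rightarrow> real) set) nmod)"
  unfolding normed_module_def Wq_simps(1)
  apply (intro conjI)
  subgoal by (auto simp: Wq_simps bdd_const)
  subgoal by (auto simp: Wq_simps bdd_add)
  subgoal by (auto simp: Wq_simps bdd_scale)
  subgoal by (auto simp: Wq_simps add.assoc)
  subgoal by (auto simp: Wq_simps add.commute)
  subgoal by (auto simp: Wq_simps)
  subgoal by (auto simp: Wq_simps)
  subgoal by (auto simp: Wq_simps distrib_right)
  subgoal by (auto simp: Wq_simps distrib_left)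
  subgoal by (auto simp: Wq_simps mult.assoc)
  subgoal by (auto simp: Wq_simps)
  subgoal by (auto simp: Wq_simps osc_nonneg)
  subgoal by (auto simp: Wq_simps osc_zero_iff)
  subgoal by (auto simp: Wq_simps osc_scale)
  subgoal by (auto simp: Wq_simps osc_add)
  subgoal by (auto simp: Wq_simps bdd_actf) (simp add: actf_def)
  subgoal by (auto simp: Wq_simps actf_def fun_eq_iff)
  subgoal by (auto simp: Wq_simps actf_def right_diff_distrib)
  subgoal by (auto simp: Wq_simps osc_actf)
  subgoal by (auto simp: Wq_simps actf_0)
  subgoal by (auto simp: Wq_simps actf_add)
  done



locale invfun =
  fixes \<mu> :: "('g::group_add \<Rightarrow> real) \<Rightarrow> real"
  assumes muadd: "\<And>f f'. bdd_real_fun f \<Longrightarrow> bdd_real_fun f' \<Longrightarrow> \<mu> (\<lambda>h. f h + f' h) = \<mu> f + \<mu> f'"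
    and muscale: "\<And>a f. bdd_real_fun f \<Longrightarrow> \<mu> (\<lambda>h. a * f h) = a * \<mu> f"
    and muone: "\<mu> (\<lambda>h. 1) = 1"
    and muinv: "\<And>g f. bdd_real_fun f \<Longrightarrow> \<mu> (\<lambda>x. f (g + x)) = \<mu> f"
    and mubound: "\<exists>K. \<forall>F B. bdd_real_fun F \<longrightarrow> (\<forall>x. \<bar>F x\<bar> \<le> B) \<longrightarrow> \<bar>\<mu> F\<bar> \<le> K * B"
begin

definition HS :: "('g \<Rightarrow> real) \<Rightarrow> ('g \<Rightarrow> real) set" where
  "HS F = {H. bdd_real_fun H \<and> (\<forall>x. 0 \<le> H x \<and> H x \<le> F x)}"

definition P :: "('g \<Rightarrow> real) \<Rightarrow> real" where
  "P F = Sup (\<mu> ` HS F)"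

definition pos :: "('g \<Rightarrow> real) \<Rightarrow> bool" where
  "pos F \<longleftrightarrow> bdd_real_fun F \<and> (\<forall>x. 0 \<le> F x)"

lemma mu_zero: "\<mu> (\<lambda>h. 0) = 0"
proof -
  have "bdd_real_fun (\<lambda>h::'g. 1::real)" unfolding bdd_real_fun_def by auto
  from muscale[OF this, of 0] show ?thesis by simp
qed

lemma HS_zero: "(\<lambda>x. 0) \<in> HS F" if "pos F"
  using that unfolding HS_def pos_def bdd_real_fun_def by auto

lemma HS_bdd: assumes "pos F" shows "bdd_above (\<mu> ` HS F)"
proof -
  obtain K where K: "\<forall>F B. bdd_real_fun F \<longrightarrow> (\<forall>x. \<bar>F x\<bar> \<le> B) \<longrightarrow> \<bar>\<mu> F\<bar> \<le> K * B"
    using mubound by blast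
  obtain B where B: "\<forall>x. \<bar>F x\<bar> \<le> B" using assms unfolding pos_def bdd_real_fun_def by blast
  have "\<mu> H \<le> K * B" if "H \<in> HS F" for H
  proof -
    have "\<forall>x. \<bar>H x\<bar> \<le> B" using that B unfolding HS_def by (smt (verit) mem_Collect_eq)
    hence "\<bar>\<mu> H\<bar> \<le> K * B" using K that unfolding HS_def by blast
    thus ?thesis by simp
  qed
  thus ?thesis unfolding bdd_above_def by blast
qed

lemma P_upper: "pos F \<Longrightarrow> H \<in> HS F \<Longrightarrow> \<mu> H \<le> P F"
  unfolding P_def by (rule cSup_upper) (auto intro: HS_bdd)

lemma P_least: "pos F \<Longrightarrow> (\<And>H. H \<in> HS F \<Longrightarrow> \<mu> H \<le> M) \<Longrightarrow> P F \<le> M"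
  unfolding P_def by (rule cSup_least) (auto dest: HS_zero)

lemma P_nonneg: "pos F \<Longrightarrow> 0 \<le> P F"
  using P_upper[OF _ HS_zero] mu_zero by fastforce

lemma bdd_min: "bdd_real_fun f \<Longrightarrow> bdd_real_fun g \<Longrightarrow> bdd_real_fun (\<lambda>x. min (f x) (g x))"
  unfolding bdd_real_fun_def
  apply (elim exE)
  subgoal for C D by (rule exI[of _ "max C D"]) (auto simp: abs_le_iff min_def max_def split: if_splits; smt (verit))
  done

lemma mu_diff: "bdd_real_fun f \<Longrightarrow> bdd_real_fun g \<Longrightarrow> \<mu> (\<lambda>x. f x - g x) = \<mu> f - \<mu> g"
  using muadd[of f "\<lambda>x. (-1) * g x"] muscale[of g "-1"] bdd_scale[of g "-1"] by simp

lemma pos_add: "pos F \<Longrightarrow> pos F' \<Longrightarrow> pos (\<lambda>x. F x + F' x)"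
  unfolding pos_def by (auto intro: bdd_add)

lemma P_add: assumes F: "pos F" and F': "pos F'" shows "P (\<lambda>x. F x + F' x) = P F + P F'"
proof (rule antisym)
  have FF: "pos (\<lambda>x. F x + F' x)" using pos_add[OF F F'] .
  show "P (\<lambda>x. F x + F' x) \<le> P F + P F'"
  proof (rule P_least[OF FF])
    fix H assume H: "H \<in> HS (\<lambda>x. F x + F' x)"
    define H1 where "H1 = (\<lambda>x. min (H x) (F x))"
    define H2 where "H2 = (\<lambda>x. H x - H1 x)"
    have bH: "bdd_real_fun H" using H unfolding HS_def by blast
    have bF: "bdd_real_fun F" using F unfolding pos_def by blast
    have h1: "H1 \<in> HS F" using H F unfolding HS_def H1_def pos_def by (auto intro: bdd_min)
    have h2: "H2 \<in> HS F'" using H F F' h1 unfolding HS_def H2_def H1_def pos_def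
      by (auto intro!: bdd_diff bdd_min simp: min_def) (smt (verit))
    have "\<mu> H = \<mu> H1 + \<mu> H2"
    proof -
      have "H = (\<lambda>x. H1 x + H2 x)" unfolding H2_def by simp
      moreover have "bdd_real_fun H1" "bdd_real_fun H2" using h1 h2 unfolding HS_def by auto
      ultimately show ?thesis using muadd by metis
    qed
    thus "\<mu> H \<le> P F + P F'" using P_upper[OF F h1] P_upper[OF F' h2] by linarith
  qed
  show "P F + P F' \<le> P (\<lambda>x. F x + F' x)"
  proof -
    have key: "\<mu> H + \<mu> H' \<le> P (\<lambda>x. F x + F' x)" if "H \<in> HS F" "H' \<in> HS F'" for H H'
    proof -
      have "(\<lambda>x. H x + H' x) \<in> HS (\<lambda>x. F x + F' x)" using that unfolding HS_def
        by (auto intro: bdd_add add_mono)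
      hence "\<mu> (\<lambda>x. H x + H' x) \<le> P (\<lambda>x. F x + F' x)" by (rule P_upper[OF FF])
      thus ?thesis using muadd that unfolding HS_def by auto
    qed
    have "\<mu> H' \<le> P (\<lambda>x. F x + F' x) - P F" if "H' \<in> HS F'" for H'
    proof -
      have "P F \<le> P (\<lambda>x. F x + F' x) - \<mu> H'"
        by (rule P_least[OF F]) (use key that in fastforce)
      thus ?thesis by linarith
    qed
    hence "P F' \<le> P (\<lambda>x. F x + F' x) - P F" by (rule P_least[OF F'])
    thus ?thesis by linarith
  qed
qed

lemma pos_scale: "pos F \<Longrightarrow> 0 \<le> a \<Longrightarrow> pos (\<lambda>x. a * F x)"
  unfolding pos_def by (auto intro: bdd_scale)

lemma P_scale_le: assumes F: "pos F" and a: "0 < a" shows "P (\<lambda>x. a * F x) \<le> a * P F"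
proof (rule P_least[OF pos_scale[OF F]])
  show "0 \<le> a" using a by simp
  fix H assume H: "H \<in> HS (\<lambda>x. a * F x)"
  have bH: "bdd_real_fun H" using H unfolding HS_def by blast
  have "(\<lambda>x. (1/a) * H x) \<in> HS F" using H a bdd_scale[OF bH, of "1/a"] unfolding HS_def
    by (auto simp: field_simps)
  hence "\<mu> (\<lambda>x. (1/a) * H x) \<le> P F" by (rule P_upper[OF F])
  moreover have "\<mu> (\<lambda>x. (1/a) * H x) = (1/a) * \<mu> H" using H muscale unfolding HS_def by blast
  ultimately have "\<mu> H / a \<le> P F" by simp
  thus "\<mu> H \<le> a * P F" using a by (simp add: pos_divide_le_eq mult.commute)
qed

lemma P_scale: assumes F: "pos F" and a: "0 \<le> a" shows "P (\<lambda>x. a * F x) = a * P F"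
proof (cases "a = 0")
  case True
  have "P (\<lambda>x. 0) \<le> 0"
  proof (rule P_least)
    show "pos (\<lambda>x. 0)" unfolding pos_def by (auto intro: bdd_const)
    fix H assume "H \<in> HS (\<lambda>x. 0)"
    hence "H = (\<lambda>x. 0)"
    proof (intro ext)
      fix x assume "H \<in> HS (\<lambda>x. 0)"
      hence "0 \<le> H x \<and> H x \<le> 0" unfolding HS_def by blast
      thus "H x = 0" by simp
    qed
    thus "\<mu> H \<le> 0" using mu_zero by simp
  qed
  moreover have "0 \<le> P (\<lambda>x. 0)" by (rule P_nonneg) (auto simp: pos_def intro: bdd_const)
  ultimately show ?thesis using True by simp
next
  case False
  hence ap: "0 < a" using a by simp
  have "P F = P (\<lambda>x. (1/a) * (a * F x))" using ap by simp
  also have "\<dots> \<le> (1/a) * P (\<lambda>x. a * F x)"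
    by (rule P_scale_le[OF pos_scale[OF F a]]) (use ap in simp)
  finally have "a * P F \<le> P (\<lambda>x. a * F x)" using ap by (simp add: field_simps)
  thus ?thesis using P_scale_le[OF F ap] by simp
qed

lemma P_inv_le: assumes F: "pos F" shows "P (\<lambda>x. F (g + x)) \<le> P F"
proof (rule P_least)
  show "pos (\<lambda>x. F (g + x))" using F unfolding pos_def by (auto intro: bdd_comp)
  fix H assume H: "H \<in> HS (\<lambda>x. F (g + x))"
  define H' where "H' = (\<lambda>x. H (- g + x))"
  have "H' \<in> HS F" using H unfolding HS_def H'_def
  proof (auto intro: bdd_comp)
    fix x assume "\<forall>x. 0 \<le> H x \<and> H x \<le> F (g + x)"
    hence "H (- g + x) \<le> F (g + (- g + x))" by blast
    thus "H (- g + x) \<le> F x" by (simp add: add.assoc[symmetric])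
  qed
  hence "\<mu> H' \<le> P F" by (rule P_upper[OF F])
  moreover have "\<mu> (\<lambda>x. H' (g + x)) = \<mu> H'" using \<open>H' \<in> HS F\<close> muinv unfolding HS_def by blast
  moreover have "(\<lambda>x. H' (g + x)) = H" unfolding H'_def by (simp add: add.assoc[symmetric])
  ultimately show "\<mu> H \<le> P F" by simp
qed

lemma P_inv: assumes F: "pos F" shows "P (\<lambda>x. F (g + x)) = P F"
proof (rule antisym[OF P_inv_le[OF F]])
  have F': "pos (\<lambda>x. F (g + x))" using F unfolding pos_def by (auto intro: bdd_comp)
  have "P (\<lambda>x. (\<lambda>x. F (g + x)) (- g + x)) \<le> P (\<lambda>x. F (g + x))" by (rule P_inv_le[OF F'])
  thus "P F \<le> P (\<lambda>x. F (g + x))" by (simp add: add.assoc[symmetric])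
qed

definition P1 where "P1 = P (\<lambda>x. 1)"

lemma pos_const: "0 \<le> c \<Longrightarrow> pos (\<lambda>x. c)"
  unfolding pos_def by (auto intro: bdd_const)

lemma P1_ge: "1 \<le> P1"
proof -
  have "(\<lambda>x. 1) \<in> HS (\<lambda>x. 1)" unfolding HS_def by (auto intro: bdd_const)
  from P_upper[OF pos_const this] show ?thesis using muone unfolding P1_def by simp
qed

lemma P_const: "0 \<le> c \<Longrightarrow> P (\<lambda>x. c) = c * P1"
  using P_scale[OF pos_const[of 1], of c] unfolding P1_def by simp

definition cof :: "('g \<Rightarrow> real) \<Rightarrow> real" where
  "cof F = (SOME c. 0 \<le> c \<and> (\<forall>x. 0 \<le> F x + c))"

definition Q where "Q F = P (\<lambda>x. F x + cof F) - cof F * P1"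

lemma cof: assumes "bdd_real_fun F" shows "0 \<le> cof F" "\<forall>x. 0 \<le> F x + cof F"
proof -
  obtain C where C: "\<forall>h. \<bar>F h\<bar> \<le> C" using assms unfolding bdd_real_fun_def by blast
  have "0 \<le> F x + C" for x using C[rule_format, of x] abs_ge_minus_self[of "F x"] by linarith
  moreover have "0 \<le> C" using C[rule_format, of undefined] by simp
  ultimately have "0 \<le> C \<and> (\<forall>x. 0 \<le> F x + C)" by blast
  hence "0 \<le> cof F \<and> (\<forall>x. 0 \<le> F x + cof F)" unfolding cof_def by (rule someI)
  thus "0 \<le> cof F" "\<forall>x. 0 \<le> F x + cof F" by auto
qed

lemma Q_eq: assumes F: "bdd_real_fun F" and c: "0 \<le> c" "\<forall>x. 0 \<le> F x + c"
  shows "Q F = P (\<lambda>x. F x + c) - c * P1"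
proof -
  let ?c = "cof F"
  have p1: "pos (\<lambda>x. F x + ?c)" using cof[OF F] F unfolding pos_def by (auto intro: bdd_add bdd_const)
  have p2: "pos (\<lambda>x. F x + c)" using c F unfolding pos_def by (auto intro: bdd_add bdd_const)
  have "P (\<lambda>x. (F x + ?c) + c) = P (\<lambda>x. F x + ?c) + c * P1"
    using P_add[OF p1 pos_const[OF c(1)]] P_const[OF c(1)] by simp
  moreover have "P (\<lambda>x. (F x + c) + ?c) = P (\<lambda>x. F x + c) + ?c * P1"
    using P_add[OF p2 pos_const[OF cof(1)[OF F]]] P_const[OF cof(1)[OF F]] by simp
  moreover have "P (\<lambda>x. (F x + ?c) + c) = P (\<lambda>x. (F x + c) + ?c)" by (simp add: algebra_simps)
  ultimately show ?thesis unfolding Q_def by linarith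
qed

lemma Q_add: assumes f: "bdd_real_fun f" and f': "bdd_real_fun f'"
  shows "Q (\<lambda>h. f h + f' h) = Q f + Q f'"
proof -
  let ?c = "cof f" and ?c' = "cof f'"
  have p1: "pos (\<lambda>x. f x + ?c)" using cof[OF f] f unfolding pos_def by (auto intro: bdd_add bdd_const)
  have p2: "pos (\<lambda>x. f' x + ?c')" using cof[OF f'] f' unfolding pos_def by (auto intro: bdd_add bdd_const)
  have "Q (\<lambda>h. f h + f' h) = P (\<lambda>x. (f x + f' x) + (?c + ?c')) - (?c + ?c') * P1"
  proof (rule Q_eq)
    show "bdd_real_fun (\<lambda>h. f h + f' h)" by (rule bdd_add[OF f f'])
    show "0 \<le> ?c + ?c'" using cof(1)[OF f] cof(1)[OF f'] by simp
    show "\<forall>x. 0 \<le> f x + f' x + (?c + ?c')"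
    proof
      fix x show "0 \<le> f x + f' x + (?c + ?c')" using cof(2)[OF f, rule_format, of x] cof(2)[OF f', rule_format, of x] by linarith
    qed
  qed
  also have "(\<lambda>x. (f x + f' x) + (?c + ?c')) = (\<lambda>x. (f x + ?c) + (f' x + ?c'))" by (simp add: algebra_simps)
  also have "P \<dots> = P (\<lambda>x. f x + ?c) + P (\<lambda>x. f' x + ?c')" by (rule P_add[OF p1 p2])
  finally show ?thesis unfolding Q_def by (simp add: algebra_simps)
qed

lemma Q_zero: "Q (\<lambda>x. 0) = 0"
  using Q_eq[of "\<lambda>x. 0" 0] P_const[of 0] by (simp add: bdd_const)

lemma Q_nonneg_scale: assumes f: "bdd_real_fun f" and a: "0 \<le> a"
  shows "Q (\<lambda>h. a * f h) = a * Q f"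
proof -
  let ?c = "cof f"
  have p1: "pos (\<lambda>x. f x + ?c)" using cof[OF f] f unfolding pos_def by (auto intro: bdd_add bdd_const)
  have "Q (\<lambda>h. a * f h) = P (\<lambda>x. a * f x + a * ?c) - (a * ?c) * P1"
    by (rule Q_eq) (use cof[OF f] a in \<open>auto intro: bdd_scale f simp: distrib_left[symmetric]\<close>)
  also have "(\<lambda>x. a * f x + a * ?c) = (\<lambda>x. a * (f x + ?c))" by (simp add: algebra_simps)
  also have "P \<dots> = a * P (\<lambda>x. f x + ?c)" by (rule P_scale[OF p1 a])
  finally show ?thesis unfolding Q_def by (simp add: algebra_simps)
qed

lemma Q_neg: assumes f: "bdd_real_fun f" shows "Q (\<lambda>h. - f h) = - Q f"
proof -
  have "Q (\<lambda>h. f h + - f h) = Q f + Q (\<lambda>h. - f h)"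
    by (rule Q_add[OF f]) (use bdd_scale[OF f, of "-1"] in simp)
  thus ?thesis using Q_zero by simp
qed

lemma Q_scale: assumes f: "bdd_real_fun f" shows "Q (\<lambda>h. a * f h) = a * Q f"
proof (cases "0 \<le> a")
  case True thus ?thesis using Q_nonneg_scale[OF f] by simp
next
  case False
  have bn: "bdd_real_fun (\<lambda>h. - f h)" using bdd_scale[OF f, of "-1"] by simp
  have "Q (\<lambda>h. a * f h) = Q (\<lambda>h. (- a) * (- f h))" by simp
  also have "\<dots> = (- a) * Q (\<lambda>h. - f h)" using False by (intro Q_nonneg_scale[OF bn]) simp
  finally show ?thesis using Q_neg[OF f] by simp
qed

lemma Q_const: "Q (\<lambda>h. c) = c * P1"
proof -
  have "Q (\<lambda>h. c) = P (\<lambda>x. c + \<bar>c\<bar>) - \<bar>c\<bar> * P1"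
    by (rule Q_eq) (auto intro: bdd_const)
  also have "\<dots> = (c + \<bar>c\<bar>) * P1 - \<bar>c\<bar> * P1" by (subst P_const) auto
  finally show ?thesis by (simp add: algebra_simps)
qed

lemma Q_pos: "bdd_real_fun f \<Longrightarrow> \<forall>h. 0 \<le> f h \<Longrightarrow> 0 \<le> Q f"
  using Q_eq[of f 0] P_nonneg[of f] unfolding pos_def by simp

lemma Q_inv: assumes f: "bdd_real_fun f" shows "Q (\<lambda>h. f ((- g) + h)) = Q f"
proof -
  let ?c = "cof f"
  have p1: "pos (\<lambda>x. f x + ?c)" using cof[OF f] f unfolding pos_def by (auto intro: bdd_add bdd_const)
  have "Q (\<lambda>h. f ((- g) + h)) = P (\<lambda>x. f (- g + x) + ?c) - ?c * P1"
    by (rule Q_eq) (use cof[OF f] in \<open>auto intro: bdd_comp f\<close>)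
  also have "P (\<lambda>x. f (- g + x) + ?c) = P (\<lambda>x. f x + ?c)"
    using P_inv[OF p1, of "- g"] by simp
  finally show ?thesis unfolding Q_def .
qed

lemma amenable: "amenable TYPE('g)"
  unfolding amenable_def
proof (rule exI[of _ "\<lambda>f. Q f / P1"], intro conjI allI impI)
  have P1: "0 < P1" using P1_ge by simp
  show "\<And>f f'. bdd_real_fun f \<and> bdd_real_fun f' \<Longrightarrow> Q (\<lambda>h. f h + f' h) / P1 = Q f / P1 + Q f' / P1"
    using Q_add by (simp add: add_divide_distrib)
  show "\<And>a f. bdd_real_fun f \<Longrightarrow> Q (\<lambda>h. a * f h) / P1 = a * (Q f / P1)"
    using Q_scale by simp
  show "\<And>c. Q (\<lambda>h. c) / P1 = c" using Q_const P1 by simp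
  show "\<And>f. bdd_real_fun f \<and> (\<forall>h. 0 \<le> f h) \<Longrightarrow> 0 \<le> Q f / P1" using Q_pos P1 by simp
  show "\<And>g f. bdd_real_fun f \<Longrightarrow> Q (\<lambda>h. f ((- g) + h)) / P1 = Q f / P1" using Q_inv by simp
qed

end



definition cv :: "'g::group_add \<Rightarrow> ('g \<Rightarrow> real) set \<Rightarrow> real" where
  "cv g = (\<lambda>A. if A \<in> mcarr (Wq :: ('g, ('g \<Rightarrow> real) set) nmod) then the_elem A g else 0)"

lemma carrWq: "A \<in> mcarr Wq \<longleftrightarrow> (\<exists>f. A = {f} \<and> bdd_real_fun f \<and> f 0 = 0)"
  by (auto simp: Wq_simps)

lemma cv_carr: "cv (g::'g::group_add) \<in> mcarr (dual_module (Wq :: ('g, ('g \<Rightarrow> real) set) nmod))"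
  unfolding dual_module_def
proof (simp, intro conjI ballI allI impI)
  show "\<exists>C. \<forall>x\<in>mcarr Wq. \<bar>cv g x\<bar> \<le> C * mnorm Wq x"
  proof (rule exI[of _ 1], intro ballI)
    fix A :: "('g \<Rightarrow> real) set" assume "A \<in> mcarr Wq"
    then obtain f where f: "A = {f}" "bdd_real_fun f" "f 0 = 0" by (auto simp: carrWq)
    show "\<bar>cv g A\<bar> \<le> 1 * mnorm Wq A"
      using osc_upper[OF f(2), of g 0] f by (simp add: cv_def Wq_simps carrWq)
  qed
qed (auto simp: cv_def carrWq Wq_simps bdd_add bdd_scale)

lemma cvs_carr: "(\<lambda>A. a * cv (g::'g::group_add) A) \<in> mcarr (dual_module (Wq :: ('g, ('g \<Rightarrow> real) set) nmod))"
  unfolding dual_module_def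
proof (simp, intro conjI ballI allI impI)
  show "\<exists>C. \<forall>x\<in>mcarr Wq. \<bar>a * cv g x\<bar> \<le> C * mnorm Wq x"
  proof (rule exI[of _ "\<bar>a\<bar>"], intro ballI)
    fix A :: "('g \<Rightarrow> real) set" assume "A \<in> mcarr Wq"
    then obtain f where f: "A = {f}" "bdd_real_fun f" "f 0 = 0" by (auto simp: carrWq)
    show "\<bar>a * cv g A\<bar> \<le> \<bar>a\<bar> * mnorm Wq A"
      using osc_upper[OF f(2), of g 0] f by (simp add: cv_def Wq_simps carrWq abs_mult mult_left_mono)
  qed
qed (auto simp: cv_def carrWq Wq_simps bdd_add bdd_scale algebra_simps)

lemma cvs_norm: "dual_norm (Wq :: ('g::group_add, ('g \<Rightarrow> real) set) nmod) (\<lambda>A. a * cv (g::'g) A) \<le> \<bar>a\<bar>"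
  unfolding dual_norm_def
proof (rule cSup_least)
  have "mzero Wq \<in> mcarr (Wq :: ('g, ('g \<Rightarrow> real) set) nmod)" using normed_Wq unfolding normed_module_def by blast
  moreover have "mnorm (Wq :: ('g, ('g \<Rightarrow> real) set) nmod) (mzero Wq) \<le> 1"
    using osc_zero_iff[of "\<lambda>x::'g. 0"] by (simp add: Wq_simps bdd_const)
  ultimately show "{\<bar>a * cv g x\<bar> |x. x \<in> mcarr Wq \<and> mnorm Wq x \<le> 1} \<noteq> {}" by blast
next
  fix t assume "t \<in> {\<bar>a * cv g x\<bar> |x. x \<in> mcarr (Wq :: ('g, ('g \<Rightarrow> real) set) nmod) \<and> mnorm Wq x \<le> 1}"
  then obtain A where A: "A \<in> mcarr (Wq :: ('g, ('g \<Rightarrow> real) set) nmod)" "mnorm Wq A \<le> 1" "t = \<bar>a * cv g A\<bar>" by blast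
  then obtain f where f: "A = {f}" "bdd_real_fun f" "f 0 = 0" by (auto simp: carrWq)
  have "\<bar>f g\<bar> \<le> 1" using osc_upper[OF f(2), of g 0] f A by (simp add: Wq_simps)
  thus "t \<le> \<bar>a\<bar>" using A f by (simp add: cv_def abs_mult mult_left_le)
qed

lemma actWq_carr: "A \<in> mcarr (Wq :: ('g::group_add, ('g \<Rightarrow> real) set) nmod) \<Longrightarrow> mact Wq g A \<in> mcarr Wq"
proof -
  assume "A \<in> mcarr (Wq :: ('g::group_add, ('g \<Rightarrow> real) set) nmod)"
  then obtain f where f: "A = {f}" "bdd_real_fun f" "f 0 = 0" by (auto simp: carrWq)
  have "actf g f 0 = 0" by (simp add: actf_def)
  thus ?thesis using f bdd_actf[OF f(2), of g] by (auto simp: Wq_simps)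
qed

lemma cv_act: "A = {f} \<Longrightarrow> bdd_real_fun f \<Longrightarrow> f 0 = 0 \<Longrightarrow>
   cv h (mact (Wq :: ('g::group_add, ('g \<Rightarrow> real) set) nmod) (- g) A) = f (g + h) - f g"
proof -
  assume f: "A = {f}" "bdd_real_fun f" "f 0 = 0"
  have A: "A \<in> mcarr (Wq :: ('g, ('g \<Rightarrow> real) set) nmod)" using f by (auto simp: carrWq)
  have e: "mact (Wq :: ('g, ('g \<Rightarrow> real) set) nmod) (- g) A = {actf (- g) f}" using f by (simp only: Wq_simps)
  have "cv h (mact (Wq :: ('g, ('g \<Rightarrow> real) set) nmod) (- g) A) = actf (- g) f h"
    using actWq_carr[OF A, of "- g"] unfolding cv_def e by simp
  thus ?thesis by (simp add: actf_def)
qed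

lemma cocyc: "cocycle (dual_module (Wq :: ('g::group_add, ('g \<Rightarrow> real) set) nmod)) 1 (\<lambda>xs. cv (hd xs))"
  unfolding cocycle_def cochain_def
proof (intro conjI allI impI)
  fix xs :: "'g list" assume "length xs = 1"
  show "cv (hd xs) \<in> mcarr (dual_module Wq)" by (rule cv_carr)
next
  fix xs :: "'g list" assume "length xs = Suc 1"
  then obtain g1 g2 where xs: "xs = [g1, g2]"
    by (metis One_nat_def Suc_length_conv length_0_conv)
  show "cobound (dual_module Wq) 1 (\<lambda>xs. cv (hd xs)) xs = mzero (dual_module Wq)"
  proof
    fix A :: "('g \<Rightarrow> real) set"
    show "cobound (dual_module Wq) 1 (\<lambda>xs. cv (hd xs)) xs A = mzero (dual_module Wq) A"
    proof (cases "A \<in> mcarr Wq")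
      case True
      then obtain f where f: "A = {f}" "bdd_real_fun f" "f 0 = 0" by (auto simp: carrWq)
      have v: "cv g A = f g" for g using True f by (simp add: cv_def)
      show ?thesis using cv_act[OF f, of g2 g1] True
        by (simp add: xs cobound_def dual_module_def v)
    next
      case False thus ?thesis by (simp add: xs cobound_def dual_module_def cv_def)
    qed
  qed
qed

lemma cobL: "coboundary (linf_module (dual_module (Wq :: ('g::group_add, ('g \<Rightarrow> real) set) nmod)) (dual_norm Wq)) 1
   (\<lambda>xs h. cv (hd xs))"
  unfolding coboundary_def
proof (simp, intro exI[of _ "\<lambda>xs h A. (-1) * cv h A"] conjI allI impI)
  show "cochain (linf_module (dual_module (Wq :: ('g, ('g \<Rightarrow> real) set) nmod)) (dual_norm Wq)) 0
          (\<lambda>xs h A. (-1) * cv h A)"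
    unfolding cochain_def linf_module_def using cvs_carr[of "-1"] cvs_norm[of "-1"] by auto
next
  fix xs :: "'g list" assume "length xs = Suc 0"
  then obtain g where xs: "xs = [g]" by (metis Suc_length_conv length_0_conv)
  show "(\<lambda>h. cv (hd xs)) = cobound (linf_module (dual_module Wq) (dual_norm Wq)) 0 (\<lambda>xs h A. (-1) * cv h A) xs"
  proof (intro ext)
    fix h :: 'g and A :: "('g \<Rightarrow> real) set"
    show "cv (hd xs) A = cobound (linf_module (dual_module Wq) (dual_norm Wq)) 0 (\<lambda>xs h A. (-1) * cv h A) xs h A"
    proof (cases "A \<in> mcarr Wq")
      case True
      then obtain f where f: "A = {f}" "bdd_real_fun f" "f 0 = 0" by (auto simp: carrWq)
      have v: "cv g A = f g" for g using True f by (simp add: cv_def)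
      have e: "g + (- g + h) = h" by (simp add: add.assoc[symmetric])
      show ?thesis using cv_act[OF f, of "- g + h" g] True
        by (simp add: xs cobound_def dual_module_def linf_module_def v e)
    next
      case False thus ?thesis by (simp add: xs cobound_def dual_module_def linf_module_def cv_def)
    qed
  qed
qed

lemma partB:
  assumes H: "comparison_injective (dual_module (Wq :: ('g::group_add, ('g \<Rightarrow> real) set) nmod)) (dual_norm Wq) 1"
  shows "amenable (G :: 'g itself)"
proof -
  let ?W = "Wq :: ('g, ('g \<Rightarrow> real) set) nmod"
  have "coboundary (dual_module ?W) 1 (\<lambda>xs. cv (hd xs))"
    using H cocyc cobL unfolding comparison_injective_def by blast
  then obtain b where bc: "cochain (dual_module ?W) 0 b"
    and beq: "\<forall>xs. length xs = Suc 0 \<longrightarrow> cv (hd xs) = cobound (dual_module ?W) 0 b xs"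
    by (auto simp: coboundary_def)
  define \<phi> where "\<phi> = b []"
  have phic: "\<phi> \<in> mcarr (dual_module ?W)" using bc unfolding cochain_def \<phi>_def by auto
  have phadd: "\<forall>x\<in>mcarr ?W. \<forall>y\<in>mcarr ?W. \<phi> (madd ?W x y) = \<phi> x + \<phi> y"
   and phsc: "\<forall>a. \<forall>x\<in>mcarr ?W. \<phi> (mscale ?W a x) = a * \<phi> x"
   and "\<exists>C. \<forall>x\<in>mcarr ?W. \<bar>\<phi> x\<bar> \<le> C * mnorm ?W x"
    using phic by (auto simp: dual_module_def)
  then obtain C where C: "\<forall>x\<in>mcarr ?W. \<bar>\<phi> x\<bar> \<le> C * mnorm ?W x" by blast
  have key: "f g = \<phi> {actf (- g) f} - \<phi> {f}" if f: "bdd_real_fun f" "f 0 = 0" for f g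
  proof -
    have A: "{f} \<in> mcarr ?W" using f by (auto simp: Wq_simps)
    have "cv g {f} = cobound (dual_module ?W) 0 b [g] {f}" using beq[rule_format, of "[g]"] by simp
    moreover have "cv g {f} = f g" using A by (simp add: cv_def)
    moreover have "mact ?W (- g) {f} = {actf (- g) f}" by (simp only: Wq_simps)
    ultimately show ?thesis using A by (simp add: cobound_def dual_module_def \<phi>_def)
  qed
  define rep :: "('g \<Rightarrow> real) \<Rightarrow> 'g \<Rightarrow> real" where "rep F = (\<lambda>x. F x - F 0)" for F
  have repc: "{rep F} \<in> mcarr ?W" if "bdd_real_fun F" for F
    using that bdd_diff[OF that bdd_const[of "F 0"]] unfolding rep_def by (auto simp: Wq_simps)
  define \<mu> where "\<mu> F = F 0 - \<phi> {rep F}" for F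
  have "invfun \<mu>"
  proof
    fix f f' :: "'g \<Rightarrow> real" assume f: "bdd_real_fun f" and f': "bdd_real_fun f'"
    have "{rep (\<lambda>h. f h + f' h)} = madd ?W {rep f} {rep f'}" by (simp add: Wq_simps rep_def algebra_simps)
    thus "\<mu> (\<lambda>h. f h + f' h) = \<mu> f + \<mu> f'" using phadd repc[OF f] repc[OF f'] unfolding \<mu>_def by simp
  next
    fix a and f :: "'g \<Rightarrow> real" assume f: "bdd_real_fun f"
    have "{rep (\<lambda>h. a * f h)} = mscale ?W a {rep f}" by (simp add: Wq_simps rep_def algebra_simps)
    thus "\<mu> (\<lambda>h. a * f h) = a * \<mu> f" using phsc repc[OF f] unfolding \<mu>_def by (simp add: algebra_simps)
  next
    have z: "{rep (\<lambda>h. 1)} = mscale ?W 0 {\<lambda>x. 0}" by (simp add: Wq_simps rep_def)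
    have "{\<lambda>x::'g. 0::real} \<in> mcarr ?W" by (simp add: Wq_simps bdd_const)
    thus "\<mu> (\<lambda>h. 1) = 1" using phsc z unfolding \<mu>_def by simp
  next
    fix g and F :: "'g \<Rightarrow> real" assume F: "bdd_real_fun F"
    have r: "bdd_real_fun (rep F)" "rep F 0 = 0"
      using bdd_diff[OF F bdd_const[of "F 0"]] unfolding rep_def by auto
    have "actf (- g) (rep F) = rep (\<lambda>x. F (g + x))" by (simp add: actf_def rep_def)
    with key[OF r, of g] show "\<mu> (\<lambda>x. F (g + x)) = \<mu> F" unfolding \<mu>_def by (simp add: rep_def)
  next
    show "\<exists>K. \<forall>F B. bdd_real_fun F \<longrightarrow> (\<forall>x. \<bar>F x\<bar> \<le> B) \<longrightarrow> \<bar>\<mu> F\<bar> \<le> K * B"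
    proof (intro exI[of _ "1 + 4 * \<bar>C\<bar>"] allI impI)
      fix F :: "'g \<Rightarrow> real" and B assume F: "bdd_real_fun F" and B: "\<forall>x. \<bar>F x\<bar> \<le> B"
      have B0: "\<bar>F 0\<bar> \<le> B" using B by blast
      have "\<bar>rep F x\<bar> \<le> 2 * B" for x using B[rule_format, of x] B0 unfolding rep_def by linarith
      hence o: "osc (rep F) \<le> 2 * (2 * B)" by (rule osc_le_2C)
      have onn: "0 \<le> osc (rep F)" using osc_nonneg bdd_diff[OF F bdd_const[of "F 0"]] unfolding rep_def by blast
      have "\<bar>\<phi> {rep F}\<bar> \<le> C * osc (rep F)" using C[rule_format, OF repc[OF F]] by (simp only: Wq_simps(6))
      also have "\<dots> \<le> \<bar>C\<bar> * osc (rep F)" using onn by (simp add: mult_right_mono)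
      also have "\<dots> \<le> \<bar>C\<bar> * (4 * B)" using o by (simp add: mult_left_mono)
      finally have "\<bar>\<phi> {rep F}\<bar> \<le> \<bar>C\<bar> * (4 * B)" .
      thus "\<bar>\<mu> F\<bar> \<le> (1 + 4 * \<bar>C\<bar>) * B" using B0 unfolding \<mu>_def by (simp add: algebra_simps)
    qed
  qed
  hence "amenable TYPE('g)" by (rule invfun.amenable)
  thus ?thesis unfolding amenable_def .
qed


theorem mainTheorem1:
  fixes G :: "'g::group_add itself"
  shows "(amenable G \<longrightarrow>
            (\<forall>W :: ('g, 'w) nmod. normed_module W \<longrightarrow>
               (\<forall>k. comparison_injective (dual_module W) (dual_norm W) k))) \<and>
         (amenable G \<longleftrightarrow>
            (\<forall>W :: ('g, ('g \<Rightarrow> real) set) nmod. normed_module W \<longrightarrow>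
               comparison_injective (dual_module W) (dual_norm W) 1)) \<and>
         (amenable G \<longleftrightarrow>
            (\<forall>W :: ('g, ('g \<Rightarrow> real) set) nmod. normed_module W \<longrightarrow>
               (\<forall>k. comparison_injective (dual_module W) (dual_norm W) k)))"
proof -
  have bk: "(\<forall>W :: ('g, ('g \<Rightarrow> real) set) nmod. normed_module W \<longrightarrow>
               comparison_injective (dual_module W) (dual_norm W) 1) \<Longrightarrow> amenable G"
    using normed_Wq partB by blast
  have c1: "amenable G \<longrightarrow>
            (\<forall>W :: ('g, 'w) nmod. normed_module W \<longrightarrow>
               (\<forall>k. comparison_injective (dual_module W) (dual_norm W) k))"
    using partA[of G] by blast
  have c1': "amenable G \<longrightarrow>
            (\<forall>W :: ('g, ('g \<Rightarrow> real) set) nmod. normed_module W \<longrightarrow>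
               (\<forall>k. comparison_injective (dual_module W) (dual_norm W) k))"
    using partA[of G] by blast
  show ?thesis
    using bk c1 c1' by blast
qed

end
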